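(* Let $P$ be a set of $n$ points in general position in the plane such that the number $m$ of points of $P$ on the boundary of the convex hull of $P$ satisfies $m\geq 10$. Then $\mu(D(P))\geq\binom{n}{2}-5$.
   Context: General position means no three points collinear. $D(P)$ is the graph whose vertices are all closed segments with both endpoints in $P$, two adjacent iff disjoint. For a graph $G$ and $U\subseteq V(G)$, two distinct vertices $x,y\in U$ are $U$-mutually visible if $G$ contains a shortest $x$-$y$ path none of whose internal vertices lies in $U$; $U$ is a mutual-visibility set if every two distinct vertices of $U$ are $U$-mutually visible. $\mu(G)$ is the maximum size of a mutual-visibility set of $G$. *)

theory Defs
  imports "HOL-Analysis.Analysis"
begin

definition walk :: "'v set \<Rightarrow> ('v \<Rightarrow> 'v \<Rightarrow> bool) \<Rightarrow> 'v list \<Rightarrow> bool" where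
  "walk V E xs \<longleftrightarrow> xs \<noteq> [] \<and> set xs \<subseteq> V \<and>
     (\<forall>i. Suc i < length xs \<longrightarrow> E (xs ! i) (xs ! Suc i))"

text \<open>A shortest x-y path: an x-y walk of minimum length (such a walk is automatically a path).\<close>
definition shortest_path :: "'v set \<Rightarrow> ('v \<Rightarrow> 'v \<Rightarrow> bool) \<Rightarrow> 'v \<Rightarrow> 'v \<Rightarrow> 'v list \<Rightarrow> bool" where
  "shortest_path V E x y xs \<longleftrightarrow> walk V E xs \<and> hd xs = x \<and> last xs = y \<and>
     (\<forall>ys. walk V E ys \<and> hd ys = x \<and> last ys = y \<longrightarrow> length xs \<le> length ys)"

definition mutually_visible :: "'v set \<Rightarrow> ('v \<Rightarrow> 'v \<Rightarrow> bool) \<Rightarrow> 'v set \<Rightarrow> 'v \<Rightarrow> 'v \<Rightarrow> bool" where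
  "mutually_visible V E U x y \<longleftrightarrow>
     (\<exists>xs. shortest_path V E x y xs \<and> set (butlast (tl xs)) \<inter> U = {})"

definition mv_set :: "'v set \<Rightarrow> ('v \<Rightarrow> 'v \<Rightarrow> bool) \<Rightarrow> 'v set \<Rightarrow> bool" where
  "mv_set V E U \<longleftrightarrow> U \<subseteq> V \<and>
     (\<forall>x\<in>U. \<forall>y\<in>U. x \<noteq> y \<longrightarrow> mutually_visible V E U x y)"

definition mu :: "'v set \<Rightarrow> ('v \<Rightarrow> 'v \<Rightarrow> bool) \<Rightarrow> nat" where
  "mu V E = Max (card ` {U. mv_set V E U})"

definition general_position :: "(real^2) set \<Rightarrow> bool" where
  "general_position P \<longleftrightarrow>
     (\<forall>a\<in>P. \<forall>b\<in>P. \<forall>c\<in>P. a \<noteq> b \<and> a \<noteq> c \<and> b \<noteq> c \<longrightarrow> \<not> collinear {a, b, c})"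

definition seg_vertices :: "(real^2) set \<Rightarrow> (real^2) set set" where
  "seg_vertices P = {closed_segment a b | a b. a \<in> P \<and> b \<in> P \<and> a \<noteq> b}"

definition seg_adj :: "(real^2) set \<Rightarrow> (real^2) set \<Rightarrow> bool" where
  "seg_adj S T \<longleftrightarrow> S \<inter> T = {}"

end

theory Submission
  imports Defs
begin

definition cr :: "real^2 \<Rightarrow> real^2 \<Rightarrow> real" where
  "cr a b = a$1 * b$2 - a$2 * b$1"

lemma inner2: "(x::real^2) \<bullet> y = x$1*y$1 + x$2*y$2"
  by (simp add: inner_vec_def sum_2)

lemma vec2_eq: "(x::real^2) = y \<longleftrightarrow> x$1 = y$1 \<and> x$2 = y$2"
  by (simp add: vec_eq_iff forall_2)

lemma cr_zero_mult:
  assumes "cr x y = 0" "x \<noteq> 0"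
  shows "\<exists>k. y = k *\<^sub>R x"
proof (cases "x$1 = 0")
  case True
  then have x2: "x$2 \<noteq> 0" using assms(2) by (simp add: vec2_eq)
  have e: "x$1 * y$2 = x$2 * y$1" using assms(1) by (simp add: cr_def)
  have "y$1 = (y$2/x$2) * x$1" using e True x2 by simp
  moreover have "y$2 = (y$2/x$2) * x$2" using x2 by simp
  ultimately show ?thesis by (intro exI[of _ "y$2/x$2"]) (simp add: vec2_eq)
next
  case False
  have e: "x$1 * y$2 = x$2 * y$1" using assms(1) by (simp add: cr_def)
  have "y$2 = (y$1/x$1) * x$2" using e False by (simp add: field_simps)
  moreover have "y$1 = (y$1/x$1) * x$1" using False by simp
  ultimately show ?thesis by (intro exI[of _ "y$1/x$1"]) (simp add: vec2_eq)
qed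

lemma cr_zero_collinear:
  assumes "cr (b-a) (c-a) = 0" "a \<noteq> b"
  shows "collinear {a,b,c::real^2}"
proof -
  have "{a,b,c} = {b,a,c}" by auto
  moreover have "collinear {0, b-a, c-a}"
    using cr_zero_mult[OF assms(1)] assms(2) by (simp add: collinear_lemma)
  ultimately show ?thesis by (simp add: collinear_3)
qed

lemma gp_cr:
  assumes "general_position P" "a \<in> P" "b \<in> P" "c \<in> P" "a \<noteq> b" "a \<noteq> c" "b \<noteq> c"
  shows "cr (b-a) (c-a) \<noteq> 0"
  using assms cr_zero_collinear unfolding general_position_def by blast

lemma cr_antisym: "cr a b = - cr b a" by (simp add: cr_def)

lemma algA:
  fixes a1 a2 b1 b2 c1 c2 u1 u2 :: real
  assumes "u1 \<noteq> 0 \<or> u2 \<noteq> 0"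
    "u1*a1+u2*a2 \<le> 0" "u1*b1+u2*b2 \<le> 0" "u1*c1+u2*c2 \<le> 0"
    "a1*b2-a2*b1 > 0" "b1*c2-b2*c1 > 0" "c1*a2-c2*a1 > 0"
  shows False
proof -
  have id: "(a1*b2-a2*b1)*(u1*c1+u2*c2) + (b1*c2-b2*c1)*(u1*a1+u2*a2) + (c1*a2-c2*a1)*(u1*b1+u2*b2) = 0"
    by algebra
  have t1: "(a1*b2-a2*b1)*(u1*c1+u2*c2) \<le> 0" using assms by (simp add: mult_nonneg_nonpos less_imp_le)
  have t2: "(b1*c2-b2*c1)*(u1*a1+u2*a2) \<le> 0" using assms by (simp add: mult_nonneg_nonpos less_imp_le)
  have t3: "(c1*a2-c2*a1)*(u1*b1+u2*b2) \<le> 0" using assms by (simp add: mult_nonneg_nonpos less_imp_le)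
  have "(b1*c2-b2*c1)*(u1*a1+u2*a2) = 0" using id t1 t2 t3 by linarith
  then have ua: "u1*a1+u2*a2 = 0" using assms by simp
  have "(c1*a2-c2*a1)*(u1*b1+u2*b2) = 0" using id t1 t2 t3 by linarith
  then have ub: "u1*b1+u2*b2 = 0" using assms by simp
  have "u1 * (a1*b2-a2*b1) = b2*(u1*a1+u2*a2) - a2*(u1*b1+u2*b2)" by algebra
  then have "u1 = 0" using ua ub assms(5) by simp
  have "u2 * (a1*b2-a2*b1) = a1*(u1*b1+u2*b2) - b1*(u1*a1+u2*a2)" by algebra
  then have "u2 = 0" using ua ub assms(5) by simp
  then show False using \<open>u1 = 0\<close> assms(1) by simp
qed

lemma algB:
  fixes a1 a2 b1 b2 w1 w2 u1 u2 :: real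
  assumes "u1 \<noteq> 0 \<or> u2 \<noteq> 0"
    "u1*a1+u2*a2 \<le> 0" "u1*b1+u2*b2 \<le> 0" "u1*w1+u2*w2 \<ge> 0"
    "b1*w2-b2*w1 > 0" "w1*a2-w2*a1 > 0" "b1*a2-b2*a1 > 0"
  shows False
proof -
  have id: "(b1*a2-b2*a1)*(u1*w1+u2*w2) = (w1*a2-w2*a1)*(u1*b1+u2*b2) + (b1*w2-b2*w1)*(u1*a1+u2*a2)"
    by algebra
  have t0: "(b1*a2-b2*a1)*(u1*w1+u2*w2) \<ge> 0" using assms by simp
  have t2: "(w1*a2-w2*a1)*(u1*b1+u2*b2) \<le> 0" using assms by (simp add: mult_nonneg_nonpos less_imp_le)
  have t3: "(b1*w2-b2*w1)*(u1*a1+u2*a2) \<le> 0" using assms by (simp add: mult_nonneg_nonpos less_imp_le)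
  have "(w1*a2-w2*a1)*(u1*b1+u2*b2) = 0" using id t0 t2 t3 by linarith
  then have ub: "u1*b1+u2*b2 = 0" using assms by simp
  have "(b1*w2-b2*w1)*(u1*a1+u2*a2) = 0" using id t0 t2 t3 by linarith
  then have ua: "u1*a1+u2*a2 = 0" using assms by simp
  have "u1 * (b1*a2-b2*a1) = a2*(u1*b1+u2*b2) - b2*(u1*a1+u2*a2)" by algebra
  then have "u1 = 0" using ua ub assms(7) by simp
  have "u2 * (b1*a2-b2*a1) = b1*(u1*a1+u2*a2) - a1*(u1*b1+u2*b2)" by algebra
  then have "u2 = 0" using ua ub assms(7) by simp
  then show False using \<open>u1 = 0\<close> assms(1) by simp
qed

lemma u_nz: "(u::real^2) \<noteq> 0 \<Longrightarrow> u$1 \<noteq> 0 \<or> u$2 \<noteq> 0"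
  by (auto simp: vec2_eq)

lemma trans_R:
  assumes gp: "general_position P" and hP: "h \<in> P" and u: "u \<noteq> 0" "\<forall>q\<in>P. u \<bullet> q \<le> u \<bullet> h"
    and abc: "a \<in> P" "b \<in> P" "c \<in> P" "a \<noteq> h" "b \<noteq> h" "c \<noteq> h" "a \<noteq> c"
    and r1: "cr (a-h) (b-h) > 0" and r2: "cr (b-h) (c-h) > 0"
  shows "cr (a-h) (c-h) > 0"
proof (rule ccontr)
  assume "\<not> ?thesis"
  moreover have "cr (a-h) (c-h) \<noteq> 0" using gp_cr[OF gp hP abc(1) abc(3)] abc by auto
  ultimately have r3: "cr (c-h) (a-h) > 0" using cr_antisym[of "c-h" "a-h"] by linarith
  have "u \<bullet> (a-h) \<le> 0" "u \<bullet> (b-h) \<le> 0" "u \<bullet> (c-h) \<le> 0"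
    using u abc by (auto simp: inner_diff_right)
  note f = this[unfolded inner2] r1[unfolded cr_def] r2[unfolded cr_def] r3[unfolded cr_def]
  show False by (rule algA[OF u_nz[OF u(1)] f])
qed

definition supp :: "(real^2) set \<Rightarrow> real^2 \<Rightarrow> bool" where
  "supp P h \<longleftrightarrow> h \<in> P \<and> (\<exists>u. u \<noteq> 0 \<and> (\<forall>q\<in>P. u \<bullet> q \<le> u \<bullet> h))"

definition edge :: "(real^2) set \<Rightarrow> real^2 \<Rightarrow> real^2 \<Rightarrow> bool" where
  "edge P h b \<longleftrightarrow> h \<in> P \<and> b \<in> P \<and> h \<noteq> b \<and> (\<forall>q\<in>P. q \<noteq> h \<longrightarrow> q \<noteq> b \<longrightarrow> cr (b-h) (q-h) > 0)"

lemma edge_exists: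
  assumes fin: "finite P" and gp: "general_position P" and s: "supp P h" and two: "P - {h} \<noteq> {}"
  shows "\<exists>b. edge P h b"
proof -
  from s obtain u where hP: "h \<in> P" and u: "u \<noteq> 0" "\<forall>q\<in>P. u \<bullet> q \<le> u \<bullet> h"
    unfolding supp_def by blast
  have "\<forall>F. F \<subseteq> P - {h} \<longrightarrow> F \<noteq> {} \<longrightarrow> (\<exists>b\<in>F. \<forall>q\<in>F. q \<noteq> b \<longrightarrow> cr (b-h) (q-h) > 0)"
  proof (intro allI impI)
    fix F assume F: "F \<subseteq> P - {h}" "F \<noteq> {}"
    have "finite F" using F fin finite_subset by blast
    then show "\<exists>b\<in>F. \<forall>q\<in>F. q \<noteq> b \<longrightarrow> cr (b-h) (q-h) > 0" using F(2) F(1)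
    proof (induction F rule: finite_ne_induct)
      case (singleton x)
      then show ?case by auto
    next
      case (insert x F)
      then obtain m where m: "m \<in> F" "\<forall>q\<in>F. q \<noteq> m \<longrightarrow> cr (m-h) (q-h) > 0" by auto
      have xm: "x \<noteq> m" using m insert by auto
      have xP: "x \<in> P" "x \<noteq> h" "m \<in> P" "m \<noteq> h" using insert m by auto
      have nz: "cr (x-h) (m-h) \<noteq> 0" using gp_cr[OF gp hP, of x m] xP xm by auto
      show ?case
      proof (cases "cr (x-h) (m-h) > 0")
        case True
        have "\<forall>q\<in>insert x F. q \<noteq> x \<longrightarrow> cr (x-h) (q-h) > 0"
        proof (intro ballI impI)
          fix q assume q: "q \<in> insert x F" "q \<noteq> x"
          show "cr (x-h) (q-h) > 0"
          proof (cases "q = m")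
            case True then show ?thesis using \<open>cr (x-h) (m-h) > 0\<close> by simp
          next
            case False
            then show ?thesis using trans_R[OF gp hP u, of x m q] q m xP insert.prems True by auto
          qed
        qed
        then show ?thesis by auto
      next
        case False
        then have "cr (m-h) (x-h) > 0" using nz cr_antisym[of "m-h" "x-h"] by linarith
        then show ?thesis using m by auto
      qed
    qed
  qed
  from this[rule_format, OF order_refl two] obtain b where
    "b \<in> P - {h}" "\<forall>q\<in>P - {h}. q \<noteq> b \<longrightarrow> cr (b-h) (q-h) > 0" by blast
  then have "edge P h b" using hP unfolding edge_def by auto
  then show ?thesis by blast
qed

lemma edge_unique: "edge P h b \<Longrightarrow> edge P h c \<Longrightarrow> b = c"
  unfolding edge_def using cr_antisym by (metis less_asym neg_0_less_iff_less)

lemma edge_supp: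
  assumes "edge P h b" shows "supp P b"
proof -
  define u :: "real^2" where "u = (\<chi> i. if i = 1 then (b-h)$2 else - (b-h)$1)"
  have u1: "u$1 = (b-h)$2" and u2: "u$2 = - (b-h)$1" by (simp_all add: u_def)
  have "b \<noteq> h" using assms edge_def by auto
  then have "u \<noteq> 0" by (auto simp: vec2_eq u1 u2)
  moreover have "\<forall>q\<in>P. u \<bullet> q \<le> u \<bullet> b"
  proof
    fix q assume q: "q \<in> P"
    have "u \<bullet> (q - h) = - cr (b-h) (q-h)" unfolding inner2 u1 u2 cr_def vector_minus_component by algebra
    moreover have "cr (b-h) (q-h) \<ge> 0"
      using assms q unfolding edge_def by (cases "q = h \<or> q = b") (auto simp: cr_def)
    moreover have "u \<bullet> (b - h) = 0" unfolding inner2 u1 u2 vector_minus_component by algebra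
    ultimately show "u \<bullet> q \<le> u \<bullet> b" by (simp add: inner_diff_right)
  qed
  ultimately show ?thesis using assms unfolding supp_def edge_def by blast
qed

lemma edge_inj:
  assumes "edge P h1 b" "edge P h2 b" shows "h1 = h2"
proof (rule ccontr)
  assume ne: "h1 \<noteq> h2"
  have "cr (b-h1) (h2-h1) > 0" using assms ne unfolding edge_def by auto
  moreover have "cr (b-h2) (h1-h2) > 0" using assms ne unfolding edge_def by auto
  moreover have "cr (b-h2) (h1-h2) = - cr (b-h1) (h2-h1)" unfolding cr_def vector_minus_component by algebra
  ultimately show False by linarith
qed

lemma edge_no2:
  assumes "edge P h b" "edge P b h" "q \<in> P" "q \<noteq> h" "q \<noteq> b" shows False
proof -
  have "cr (b-h) (q-h) > 0" using assms unfolding edge_def by auto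
  moreover have "cr (h-b) (q-b) > 0" using assms unfolding edge_def by auto
  moreover have "cr (h-b) (q-b) = - cr (b-h) (q-h)" unfolding cr_def vector_minus_component by algebra
  ultimately show False by linarith
qed

definition sig :: "(real^2) set \<Rightarrow> real^2 \<Rightarrow> real^2" where
  "sig P h = (THE b. edge P h b)"

definition orb :: "(real^2) set \<Rightarrow> real^2 \<Rightarrow> nat \<Rightarrow> real^2" where
  "orb P h0 k = (sig P ^^ k) h0"

lemma sig_edge:
  assumes "finite P" "general_position P" "supp P h" "card P \<ge> 3"
  shows "edge P h (sig P h)"
proof -
  have "P - {h} \<noteq> {}"
  proof
    assume "P - {h} = {}"
    then have "P \<subseteq> {h}" by auto
    then have "card P \<le> 1" using card_mono[of "{h}" P] by simp
    then show False using assms(4) by simp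
  qed
  then obtain b where "edge P h b" using edge_exists assms by blast
  then show ?thesis unfolding sig_def using edge_unique by (metis theI)
qed

lemma orb_Suc: "orb P h0 (Suc k) = sig P (orb P h0 k)"
  by (simp add: orb_def)

lemma orb_edge:
  assumes "finite P" "general_position P" "supp P h0" "card P \<ge> 3"
  shows "supp P (orb P h0 k) \<and> edge P (orb P h0 k) (orb P h0 (Suc k))"
proof (induction k)
  case 0
  then show ?case using sig_edge[OF assms(1,2) _ assms(4)] assms(3) by (simp add: orb_def)
next
  case (Suc k)
  then have "supp P (orb P h0 (Suc k))" using edge_supp by blast
  then show ?case using sig_edge[OF assms(1,2) _ assms(4)] by (simp add: orb_Suc)
qed

lemma orb_shift:
  assumes "finite P" "general_position P" "supp P h0" "card P \<ge> 3"
    and "orb P h0 (j + d) = orb P h0 j"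
  shows "orb P h0 d = orb P h0 0"
  using assms(5)
proof (induction j)
  case 0 then show ?case by simp
next
  case (Suc j)
  have e1: "edge P (orb P h0 (j + d)) (orb P h0 (Suc (j + d)))" using orb_edge[OF assms(1-4)] by blast
  have e2: "edge P (orb P h0 j) (orb P h0 (Suc j))" using orb_edge[OF assms(1-4)] by blast
  have "orb P h0 (j + d) = orb P h0 j" using edge_inj[OF e1] e2 Suc.prems by simp
  then show ?case using Suc.IH by blast
qed

lemma orb_period:
  assumes "orb P h0 d = orb P h0 0"
  shows "orb P h0 (j + m * d) = orb P h0 j"
proof -
  have a: "orb P h0 (i + d) = orb P h0 i" for i
    by (induction i) (use assms in \<open>simp_all add: orb_Suc\<close>)
  show ?thesis
    by (induction m) (simp_all, metis a add.assoc add.commute)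
qed

lemma orb_mod:
  assumes "orb P h0 d = orb P h0 0"
  shows "orb P h0 k = orb P h0 (k mod d)"
  using orb_period[OF assms, of "k mod d" "k div d"] by simp

lemma orb_cover:
  assumes fin: "finite P" and gp: "general_position P" and s0: "supp P h0" and c3: "card P \<ge> 3"
    and d: "0 < d" "orb P h0 d = orb P h0 0"
    and hP: "h \<in> P" and u: "u \<noteq> 0" "\<forall>q\<in>P. u \<bullet> q \<le> u \<bullet> h"
  shows "h \<in> orb P h0 ` {..<d}"
proof (rule ccontr)
  assume hn: "h \<notin> orb P h0 ` {..<d}"
  let ?z = "orb P h0"
  have inimg: "?z k \<in> ?z ` {..<d}" for k
    using orb_mod[OF d(2), of k] d(1) by auto
  define f where "f j = u \<bullet> ?z j" for j
  define M where "M = Max (f ` {..<d})"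
  have "M \<in> f ` {..<d}" unfolding M_def using d(1) by (intro Max_in) auto
  then obtain i where i: "i < d" "f i = M" by auto
  have fmax: "f k \<le> f i" for k
  proof -
    obtain j where j: "j < d" "?z k = ?z j" using inimg[of k] by auto
    have "f j \<le> M" unfolding M_def using j(1) by (intro Max_ge) auto
    then show ?thesis using i(2) j(2) unfolding f_def by simp
  qed
  define c where "c = ?z i"
  define c2 where "c2 = ?z (Suc i)"
  define c1 where "c1 = ?z (i + d - 1)"
  have "?z (Suc (i + d - 1)) = c"
    using orb_period[OF d(2), of i 1] d(1) unfolding c_def by simp
  then have ec1: "edge P c1 c" using orb_edge[OF fin gp s0 c3, of "i + d - 1"] unfolding c1_def by simp
  have ec2: "edge P c c2" using orb_edge[OF fin gp s0 c3, of i] unfolding c_def c2_def by simp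
  have hne: "h \<noteq> c" "h \<noteq> c1" "h \<noteq> c2" using hn inimg unfolding c_def c1_def c2_def by metis+
  have "c1 \<noteq> c2"
  proof
    assume "c1 = c2"
    then have ec3: "edge P c c1" using ec2 by simp
    have "c1 \<noteq> c" using ec1 edge_def by auto
    show False using edge_no2[OF ec1 ec3 hP] hne by auto
  qed
  have r1: "cr (c2-c) (h-c) > 0" using ec2 hP hne unfolding edge_def by auto
  have "cr (c-c1) (h-c1) > 0" using ec1 hP hne unfolding edge_def by auto
  moreover have "cr (c-c1) (h-c1) = cr (h-c) (c1-c)" unfolding cr_def vector_minus_component by algebra
  ultimately have r2: "cr (h-c) (c1-c) > 0" by simp
  have r3: "cr (c2-c) (c1-c) > 0" using ec2 ec1 \<open>c1 \<noteq> c2\<close> unfolding edge_def by auto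
  have "u \<bullet> (h - c) \<ge> 0" using u ec2 unfolding edge_def by (auto simp: inner_diff_right)
  moreover have "u \<bullet> (c1 - c) \<le> 0" using fmax[of "i + d - 1"] unfolding f_def c_def c1_def by (simp add: inner_diff_right)
  moreover have "u \<bullet> (c2 - c) \<le> 0" using fmax[of "Suc i"] unfolding f_def c_def c2_def by (simp add: inner_diff_right)
  ultimately have f: "u$1 * (c1-c)$1 + u$2 * (c1-c)$2 \<le> 0" "u$1 * (c2-c)$1 + u$2 * (c2-c)$2 \<le> 0"
    "u$1 * (h-c)$1 + u$2 * (h-c)$2 \<ge> 0" by (simp_all only: inner2)
  note g = r1[unfolded cr_def] r2[unfolded cr_def] r3[unfolded cr_def]
  show False by (rule algB[OF u_nz[OF u(1)] f g])
qed

lemma frontier_supp: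
  assumes "h \<in> P" "h \<in> frontier (convex hull P)"
  shows "supp P h"
proof (cases "interior (convex hull P) = {}")
  case True
  obtain a b where ab: "a \<noteq> 0" "convex hull P \<subseteq> {x. a \<bullet> x = b}"
    using empty_interior_subset_hyperplane[OF convex_convex_hull True] by blast
  have eq: "\<forall>q\<in>P. a \<bullet> q = b" using ab(2) hull_subset[of P convex] by blast
  then have "\<forall>q\<in>P. a \<bullet> q \<le> a \<bullet> h" using assms(1) by simp
  then show ?thesis using ab assms unfolding supp_def by blast
next
  case False
  then have ri: "rel_interior (convex hull P) = interior (convex hull P)" by (rule rel_interior_nonempty_interior)
  have "h \<in> closure (convex hull P)" "h \<notin> rel_interior (convex hull P)"
    using assms(2) ri by (auto simp: frontier_def)
  then obtain a where a: "a \<noteq> 0" "\<And>y. y \<in> closure (convex hull P) \<Longrightarrow> a \<bullet> h \<le> a \<bullet> y"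
    using supporting_hyperplane_relative_frontier[OF convex_convex_hull] by metis
  have "\<forall>q\<in>P. (-a) \<bullet> q \<le> (-a) \<bullet> h"
    using a(2) hull_subset[of P convex] closure_subset by fastforce
  moreover have "-a \<noteq> 0" using a(1) by simp
  ultimately show ?thesis using assms unfolding supp_def by blast
qed

lemma orb_distinct:
  assumes fin: "finite P" and gp: "general_position P" and c3: "card P \<ge> 3"
    and H: "H \<subseteq> P" "\<forall>h\<in>H. supp P h" "h0 \<in> H" "card H \<ge> 10"
    and jk: "j < 10" "k < 10" "orb P h0 j = orb P h0 k"
  shows "j = k"
proof -
  have s0: "supp P h0" using H by blast
  have main: False if lt: "j' < k'" "k' < 10" "orb P h0 j' = orb P h0 k'" for j' k'
  proof -
    have "orb P h0 (j' + (k' - j')) = orb P h0 j'" using lt by simp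
    then have per: "orb P h0 (k' - j') = orb P h0 0" by (rule orb_shift[OF fin gp s0 c3])
    have "H \<subseteq> orb P h0 ` {..<k' - j'}"
    proof
      fix h assume "h \<in> H"
      then obtain u where "h \<in> P" "u \<noteq> 0" "\<forall>q\<in>P. u \<bullet> q \<le> u \<bullet> h" using H unfolding supp_def by blast
      then show "h \<in> orb P h0 ` {..<k' - j'}" using orb_cover[OF fin gp s0 c3 _ per] lt by simp
    qed
    then have "card H \<le> card (orb P h0 ` {..<k' - j'})" by (intro card_mono) auto
    also have "\<dots> \<le> k' - j'" using card_image_le[of "{..<k'-j'}" "orb P h0"] by simp
    finally show False using H(4) lt by simp
  qed
  show ?thesis
  proof (rule ccontr)
    assume "j \<noteq> k"
    then show False using main[of j k] main[of k j] jk by (cases "j < k") auto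
  qed
qed

lemma seg_disj:
  assumes e: "edge P h b" and pq: "p \<in> P" "q \<in> P" "p \<noteq> h" "p \<noteq> b" "q \<noteq> h" "q \<noteq> b"
  shows "closed_segment h b \<inter> closed_segment p q = {}"
proof -
  define g where "g v = cr (b-h) (v-h)" for v
  have gp: "g p > 0" "g q > 0" using e pq unfolding edge_def g_def by auto
  have pos: "g v > 0" if vin: "v \<in> closed_segment p q" for v
  proof -
    obtain t where t: "0 \<le> t" "t \<le> 1" "v = (1-t) *\<^sub>R p + t *\<^sub>R q"
      using vin unfolding in_segment by auto
    have "g v = (1-t) * g p + t * g q" unfolding g_def cr_def t(3)
      by (simp add: algebra_simps)
    moreover have "(1-t) * g p + t * g q > 0"
    proof (cases "t = 0")
      case True then show ?thesis using gp by simp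
    next
      case False
      then have "t * g q > 0" using t gp by simp
      moreover have "(1-t) * g p \<ge> 0" using t gp by simp
      ultimately show ?thesis by linarith
    qed
    ultimately show ?thesis by simp
  qed
  have zero: "g v = 0" if vin: "v \<in> closed_segment h b" for v
  proof -
    obtain t where t: "v = (1-t) *\<^sub>R h + t *\<^sub>R b"
      using vin unfolding in_segment by auto
    show ?thesis unfolding g_def cr_def t by (simp add: algebra_simps)
  qed
  show ?thesis using pos zero by force
qed

lemma seg_vertices_image:
  "seg_vertices P = (\<lambda>S. convex hull S) ` {S. S \<subseteq> P \<and> card S = 2}"
proof -
  have "seg_vertices P = (\<lambda>S. convex hull S) ` {S. S \<subseteq> P \<and> (\<exists>a b. a \<noteq> b \<and> S = {a,b})}"
    unfolding seg_vertices_def by (auto simp: segment_convex_hull)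
  also have "{S. S \<subseteq> P \<and> (\<exists>a b. a \<noteq> b \<and> S = {a,b})} = {S. S \<subseteq> P \<and> card S = 2}"
    by (auto simp: card_2_iff)
  finally show ?thesis .
qed

lemma card_V:
  assumes "finite P"
  shows "card (seg_vertices P) = card P choose 2" "finite (seg_vertices P)"
proof -
  have inj: "inj_on (\<lambda>S. convex hull S) {S. S \<subseteq> P \<and> card S = (2::nat)}"
  proof (rule inj_onI)
    fix S T assume S: "S \<in> {S. S \<subseteq> P \<and> card S = 2}" and T: "T \<in> {S. S \<subseteq> P \<and> card S = 2}"
      and eq: "convex hull S = convex hull T"
    obtain a b where ab: "S = {a,b}" using S by (auto simp: card_2_iff)
    obtain c d where cd: "T = {c,d}" using T by (auto simp: card_2_iff)
    have "closed_segment a b = closed_segment c d" using eq ab cd by (simp add: segment_convex_hull)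
    then show "S = T" using ab cd by simp
  qed
  have fin: "finite {S. S \<subseteq> P \<and> card S = (2::nat)}" using assms by simp
  show "card (seg_vertices P) = card P choose 2"
    unfolding seg_vertices_image using card_image[OF inj] n_subsets[OF assms] by simp
  show "finite (seg_vertices P)" unfolding seg_vertices_image using fin by simp
qed

lemma mu_ge:
  assumes "finite V" "mv_set V E U"
  shows "card U \<le> mu V E"
proof -
  have "{U. mv_set V E U} \<subseteq> Pow V" unfolding mv_set_def by auto
  then have "finite {U. mv_set V E U}" using assms(1) finite_subset by blast
  then show ?thesis unfolding mu_def using assms(2) by (intro Max_ge) auto
qed

lemma walk_short:
  assumes "walk V E ys" "hd ys = x" "last ys = y" "x \<noteq> y"
  shows "length ys \<ge> 2" "length ys = 2 \<Longrightarrow> E x y"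
proof -
  show "length ys \<ge> 2" using assms
    by (cases ys rule: remdups_adj.cases) (auto simp: walk_def)
  show "length ys = 2 \<Longrightarrow> E x y" using assms
    by (cases ys rule: remdups_adj.cases) (auto simp: walk_def)
qed

lemma mv_from_W:
  assumes WV: "W \<subseteq> V"
    and key: "\<And>x y. x \<in> V - W \<Longrightarrow> y \<in> V - W \<Longrightarrow> x \<noteq> y \<Longrightarrow> \<not> E x y \<Longrightarrow> (\<exists>w\<in>W. E x w \<and> E w y)"
  shows "mv_set V E (V - W)"
  unfolding mv_set_def
proof (intro conjI ballI impI)
  show "V - W \<subseteq> V" by auto
  fix x y assume x: "x \<in> V - W" and y: "y \<in> V - W" and ne: "x \<noteq> y"
  show "mutually_visible V E (V - W) x y"
  proof (cases "E x y")
    case True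
    have "shortest_path V E x y [x,y]"
      unfolding shortest_path_def
    proof (intro conjI allI impI)
      show "walk V E [x,y]" using x y True by (auto simp: walk_def less_Suc_eq)
      fix ys assume "walk V E ys \<and> hd ys = x \<and> last ys = y"
      then show "length [x,y] \<le> length ys" using walk_short(1)[of V E ys x y] ne by auto
    qed auto
    then show ?thesis unfolding mutually_visible_def by (intro exI[of _ "[x,y]"]) auto
  next
    case False
    then obtain w where w: "w \<in> W" "E x w" "E w y" using key x y ne by blast
    have "shortest_path V E x y [x,w,y]"
      unfolding shortest_path_def
    proof (intro conjI allI impI)
      show "walk V E [x,w,y]" using x y w WV by (auto simp: walk_def less_Suc_eq nth_Cons split: nat.splits)
      fix ys assume ys: "walk V E ys \<and> hd ys = x \<and> last ys = y"
      have "length ys \<ge> 2" using ys walk_short(1)[of V E ys x y] ne by blast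
      moreover have "length ys \<noteq> 2" using ys walk_short(2)[of V E ys x y] ne False by blast
      ultimately show "length [x,w,y] \<le> length ys" by simp
    qed auto
    then show ?thesis unfolding mutually_visible_def using w by (intro exI[of _ "[x,w,y]"]) auto
  qed
qed

lemma pigeon5:
  fixes z :: "nat \<Rightarrow> 'a"
  assumes dist: "\<And>j k. j < 10 \<Longrightarrow> k < 10 \<Longrightarrow> z j = z k \<Longrightarrow> j = k"
    and cX: "card X \<le> 4" "finite X"
  shows "\<exists>i<5. z (2*i) \<notin> X \<and> z (2*i+1) \<notin> X"
proof (rule ccontr)
  assume "\<not> ?thesis"
  then have hit: "\<forall>i<5. z (2*i) \<in> X \<or> z (2*i+1) \<in> X" by auto
  define gi where "gi i = (if z (2*i) \<in> X then 2*i else 2*i+1)" for i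
  have gX: "(z \<circ> gi) ` {..<5} \<subseteq> X" using hit unfolding gi_def by auto
  have "inj_on (z \<circ> gi) {..<5}"
  proof (rule inj_onI)
    fix i j assume i: "i \<in> {..<(5::nat)}" and j: "j \<in> {..<(5::nat)}" and eq: "(z \<circ> gi) i = (z \<circ> gi) j"
    have "gi i < 10" "gi j < 10" using i j unfolding gi_def by auto
    then have "gi i = gi j" using dist eq by simp
    moreover have "gi i div 2 = i" "gi j div 2 = j" unfolding gi_def by auto
    ultimately show "i = j" by metis
  qed
  then have "card ((z \<circ> gi) ` {..<5}) = 5" using card_image by fastforce
  moreover have "card ((z \<circ> gi) ` {..<5}) \<le> card X" using gX cX(2) by (rule card_mono[rotated])
  ultimately show False using cX by simp
qed

lemma card4: "card {a,b,c,d} \<le> 4"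
proof -
  have "{a,b,c,d} = set [a,b,c,d]" by simp
  then show ?thesis using card_length[of "[a,b,c,d]"] by simp
qed

theorem lemma18:
  fixes P :: "(real^2) set"
  assumes "finite P"
    and "general_position P"
    and "card (P \<inter> frontier (convex hull P)) \<ge> 10"
  shows "int (mu (seg_vertices P) seg_adj) \<ge> int (card P choose 2) - 5"
proof -
  note fin = assms(1) and gp = assms(2)
  define H where "H = P \<inter> frontier (convex hull P)"
  have HP: "H \<subseteq> P" unfolding H_def by auto
  have cH: "card H \<ge> 10" using assms(3) unfolding H_def by simp
  have Hs: "\<forall>h\<in>H. supp P h" unfolding H_def using frontier_supp by blast
  have "card H \<le> card P" using HP fin by (rule card_mono[rotated])
  then have c3: "card P \<ge> 3" using cH by simp
  have "H \<noteq> {}" using cH by auto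
  then obtain h0 where h0: "h0 \<in> H" by auto
  have s0: "supp P h0" using Hs h0 by blast
  define z where "z = orb P h0"
  have ed: "edge P (z k) (z (Suc k))" for k using orb_edge[OF fin gp s0 c3] unfolding z_def by blast
  have zP: "z k \<in> P" for k using ed[of k] unfolding edge_def by blast
  have dist: "j = k" if "j < 10" "k < 10" "z j = z k" for j k
    using orb_distinct[OF fin gp c3 HP Hs h0 cH] that unfolding z_def by blast
  define V where "V = seg_vertices P"
  define e where "e i = closed_segment (z (2*i)) (z (2*i+1))" for i
  define W where "W = e ` {..<5}"
  have finV: "finite V" and cV: "card V = card P choose 2" using card_V[OF fin] unfolding V_def by auto
  have WV: "W \<subseteq> V"
  proof
    fix w assume "w \<in> W"
    then obtain i where "w = e i" unfolding W_def by auto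
    moreover have "z (2*i) \<noteq> z (2*i+1)" using ed[of "2*i"] unfolding edge_def by simp
    ultimately show "w \<in> V" unfolding V_def seg_vertices_def e_def using zP by blast
  qed
  have cW: "card W \<le> 5" unfolding W_def using card_image_le[of "{..<5::nat}" e] by simp
  have mv: "mv_set V seg_adj (V - W)"
  proof (rule mv_from_W[OF WV])
    fix x y assume x: "x \<in> V - W" and y: "y \<in> V - W" and "x \<noteq> y" "\<not> seg_adj x y"
    obtain p1 q1 where x': "x = closed_segment p1 q1" "p1 \<in> P" "q1 \<in> P"
      using x unfolding V_def seg_vertices_def by blast
    obtain p2 q2 where y': "y = closed_segment p2 q2" "p2 \<in> P" "q2 \<in> P"
      using y unfolding V_def seg_vertices_def by blast
    have "\<exists>i<5. z (2*i) \<notin> {p1,q1,p2,q2} \<and> z (2*i+1) \<notin> {p1,q1,p2,q2}"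
      using pigeon5[OF dist card4 finite.insertI[OF finite.insertI[OF finite.insertI[OF finite.insertI[OF finite.emptyI]]]]] .
    then obtain i where i: "i < 5" "z (2*i) \<notin> {p1,q1,p2,q2}" "z (2*i+1) \<notin> {p1,q1,p2,q2}"
      by blast
    have ei: "edge P (z (2*i)) (z (2*i+1))" using ed[of "2*i"] by simp
    have "e i \<inter> x = {}" unfolding e_def x'(1) using seg_disj[OF ei x'(2,3)] i by auto
    moreover have "e i \<inter> y = {}" unfolding e_def y'(1) using seg_disj[OF ei y'(2,3)] i by auto
    moreover have "e i \<in> W" unfolding W_def using i by auto
    ultimately show "\<exists>w\<in>W. seg_adj x w \<and> seg_adj w y" unfolding seg_adj_def by blast
  qed
  have "card (V - W) \<le> mu V seg_adj" using mu_ge[OF finV mv] .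
  moreover have "card (V - W) = card V - card W"
    using WV finV by (simp add: card_Diff_subset finite_subset)
  moreover have "card W \<le> card V" using WV finV by (rule card_mono[rotated])
  ultimately show ?thesis using cV cW unfolding V_def by linarith
qed

end
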